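(* Let $d\ge1$, $\Omega_s<0$, $\mathbf{\Omega}_a\in\mathbb{R}^{d\times d}$ skew-symmetric, $\mathbf{\Omega}=\Omega_s\mathbf{I}+\mathbf{\Omega}_a$, $D>0$, $\Sigma_0>0$, $\mathbf{m}_0\in\mathbb{R}^d$, $T>0$, $\epsilon\ge0$, $\lambda>0$, and let $\hat{\mathbf{D}}\in\mathbb{R}^{d\times d}$ be symmetric. Let $\mathbf{m}_t=e^{\mathbf{\Omega}t}\mathbf{m}_0$ and $\sigma_t^2=\Sigma_0e^{2\Omega_st}+D(e^{2\Omega_st}-1)/\Omega_s$ (so the isotropic Ornstein–Uhlenbeck process $d\mathbf{x}=\mathbf{\Omega}\mathbf{x}dt+\sqrt{2D}d\mathbf{W}$, $\mathbf{x}_0\sim\mathcal{N}(\mathbf{m}_0,\Sigma_0\mathbf{I})$, has marginals $\mathcal{N}(\mathbf{m}_t,\sigma_t^2\mathbf{I})$). Set $\mathbf{P}=\int_0^T\mathbf{m}_t\mathbf{m}_t^Tdt$, with eigendecomposition $\mathbf{P}=\sum_{i=1}^d\gamma_i\mathbf{u}_i\mathbf{u}_i^T$ ($\{\mathbf{u}_i\}$ orthonormal, $\gamma_1\ge\dots\ge\gamma_d\ge0$), and $$q=\int_0^T\frac{\sigma_t^4}{\sqrt{\epsilon^2/16+\sigma_t^4}}dt,\qquad r=\int_0^T\frac{\sigma_t^2}{\sqrt{\epsilon^2/16+\sigma_t^4}}dt.$$ Consider, for $\hat{\mathbf{\Omega}}\in\mathbb{R}^{d\times d}$, $$\mathcal{L}_\epsilon(\hat{\mathbf{\Omega}})=\mathrm{tr}\Big((\hat{\mathbf{\Omega}}-\mathbf{\Omega})^T(\hat{\mathbf{\Omega}}-\mathbf{\Omega})\mathbf{P}+\tfrac{q}{4}(\hat{\mathbf{\Omega}}+\hat{\mathbf{\Omega}}^T-2\Omega_s\mathbf{I})^2+r(\hat{\mathbf{\Omega}}+\hat{\mathbf{\Omega}}^T-2\Omega_s\mathbf{I})(\hat{\mathbf{D}}-D\mathbf{I})+\lambda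 T\hat{\mathbf{\Omega}}\hat{\mathbf{\Omega}}^T\Big).$$ Let $\tilde\lambda=\lambda T$, $\tilde q=q+\tilde\lambda$, $\Gamma_+=\tfrac12(\tilde\lambda^{-1}+\tilde q^{-1})$, $\omega_{ij}=\mathbf{u}_i^T\mathbf{\Omega}_a\mathbf{u}_j$ and $\eta_{ij}=\mathbf{u}_i^T\big(\Omega_s\mathbf{I}+r(\hat{\mathbf{D}}-D\mathbf{I})/\tilde\lambda\big)\mathbf{u}_j$. Then the minimum of $\mathcal{L}_\epsilon$ over $\mathbb{R}^{d\times d}$ is attained at $$\hat{\mathbf{\Omega}}=\mathbf{\Omega}-\sum_{i,j=1}^d\frac{\tilde\lambda\tilde q^{-1}\eta_{ij}(1+\gamma_i\tilde\lambda^{-1})+\omega_{ij}(1+\gamma_i\tilde q^{-1})}{\tilde q^{-1}\tilde\lambda^{-1}\gamma_i\gamma_j+\Gamma_+(\gamma_i+\gamma_j)+1}\,\mathbf{u}_i\mathbf{u}_j^T.$$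
   Context: $\mathcal{L}_\epsilon$ is the continuous-time limit of the regularized Sinkhorn-divergence (entropic regularization $\epsilon$) inference loss for a linear force $\hat{\mathbf{\Omega}}\mathbf{x}$ with assumed diffusion tensor $\hat{\mathbf{D}}$ in this isotropic setting; the claim concerns this explicit function only. *)

theory Defs
  imports "HOL-Analysis.Analysis"
begin

primrec mpow :: "real^'n^'n \<Rightarrow> nat \<Rightarrow> real^'n^'n" where
  "mpow A 0 = mat 1"
| "mpow A (Suc k) = A ** mpow A k"

definition mexp :: "real^'n^'n \<Rightarrow> real^'n^'n" where
  "mexp A = (\<Sum>k. (1 / fact k) *\<^sub>R mpow A k)"

definition outer :: "real^'n \<Rightarrow> real^'n \<Rightarrow> real^'n^'n" where
  "outer u v = (\<chi> i j. u $ i * v $ j)"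

definition loss_eps ::
  "real^'n^'n \<Rightarrow> real \<Rightarrow> real \<Rightarrow> real \<Rightarrow> real \<Rightarrow> real^'n^'n \<Rightarrow> real
   \<Rightarrow> real^'n^'n \<Rightarrow> real \<Rightarrow> real^'n^'n \<Rightarrow> real" where
  "loss_eps P q r lam T Om Oms Dh D Omh =
     trace (transpose (Omh - Om) ** (Omh - Om) ** P
       + (q / 4) *\<^sub>R ((Omh + transpose Omh - (2 * Oms) *\<^sub>R mat 1)
                         ** (Omh + transpose Omh - (2 * Oms) *\<^sub>R mat 1))
       + r *\<^sub>R ((Omh + transpose Omh - (2 * Oms) *\<^sub>R mat 1) ** (Dh - D *\<^sub>R mat 1))
       + (lam * T) *\<^sub>R (Omh ** transpose Omh))"

end

theory Submission
  imports Defs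
begin

lemma fid_c:
  fixes q lt gk gl e w qt Gp :: real
  assumes "lt > 0" "q \<ge> 0" "gk \<ge> 0" "gl \<ge> 0"
  and qt_def: "qt = q + lt"
  and Gp_def: "Gp = (inverse lt + inverse qt) / 2"
  shows "(lt * inverse qt * e * (1 + gk * inverse lt) + w * (1 + gk * inverse qt))
                  / (inverse qt * inverse lt * gk * gl + Gp * (gk + gl) + 1)
    = lt*(e*(lt+gk)+w*(qt+gk)) / (gk*gl + (qt+lt)*(gk+gl)/2 + qt*lt)"
proof -
  have qt: "qt > 0" using assms by simp
  have N: "gk*gl + (qt+lt)*(gk+gl)/2 + qt*lt > 0" using qt assms
    by (simp add: add_pos_nonneg add_nonneg_pos)
  have dd: "inverse qt * inverse lt * gk * gl + Gp * (gk + gl) + 1 = (gk*gl + (qt+lt)*(gk+gl)/2 + qt*lt) / (qt*lt)"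
    unfolding Gp_def using qt assms(1) by (simp add: field_simps)
  have nn: "lt * inverse qt * e * (1 + gk * inverse lt) + w * (1 + gk * inverse qt) = (e*(lt+gk)+w*(qt+gk)) / qt"
    using qt assms(1) by (simp add: field_simps)
  define NN where "NN = gk*gl + (qt+lt)*(gk+gl)/2 + qt*lt"
  have "NN \<noteq> 0" using N NN_def by simp
  then show ?thesis unfolding dd nn NN_def[symmetric] using qt assms(1) by (simp add: field_simps)
qed

lemma fid:
  fixes q lt gk gl e w qt Gp :: real
  assumes "lt > 0" "q \<ge> 0" "gk \<ge> 0" "gl \<ge> 0"
  and qt_def: "qt = q + lt"
  and Gp_def: "Gp = (inverse lt + inverse qt) / 2"
  shows "-2*gl*((lt * inverse qt * e * (1 + gk * inverse lt) + w * (1 + gk * inverse qt))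
                  / (inverse qt * inverse lt * gk * gl + Gp * (gk + gl) + 1))
   - q*(((lt * inverse qt * e * (1 + gk * inverse lt) + w * (1 + gk * inverse qt))
                  / (inverse qt * inverse lt * gk * gl + Gp * (gk + gl) + 1))+
  ((lt * inverse qt * e * (1 + gl * inverse lt) + (-w) * (1 + gl * inverse qt))
                  / (inverse qt * inverse lt * gl * gk + Gp * (gl + gk) + 1)))
  - 2*lt*((lt * inverse qt * e * (1 + gk * inverse lt) + w * (1 + gk * inverse qt))
                  / (inverse qt * inverse lt * gk * gl + Gp * (gk + gl) + 1)) + 2*lt*(e+w) = 0"
proof -
  have qt: "qt > 0" using assms by simp
  have N: "gk*gl + (qt+lt)*(gk+gl)/2 + qt*lt > 0" using qt assms
    by (simp add: add_pos_nonneg add_nonneg_pos)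
  have N2: "gl*gk + (qt+lt)*(gl+gk)/2 + qt*lt = gk*gl + (qt+lt)*(gk+gl)/2 + qt*lt" by (simp add: algebra_simps)
  define NN where "NN = gk*gl + (qt+lt)*(gk+gl)/2 + qt*lt"
  have NN0: "NN \<noteq> 0" using N NN_def by simp
  define X where "X = e*(lt+gk)+w*(qt+gk)"
  define Y where "Y = e*(lt+gl)+(-w)*(qt+gl)"
  have poly: "-2*gl*lt*X-q*lt*(X+Y)-2*lt*lt*X+2*lt*(e+w)*NN = 0"
    unfolding X_def Y_def NN_def qt_def by (simp add: algebra_simps)
  have "-2*gl*(lt*X/NN) - q*(lt*X/NN + lt*Y/NN) - 2*lt*(lt*X/NN) + 2*lt*(e+w)
       = (-2*gl*lt*X-q*lt*(X+Y)-2*lt*lt*X+2*lt*(e+w)*NN) / NN"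
    using NN0 by (simp add: field_simps)
  also have "... = 0" using poly by simp
  finally have fin: "-2*gl*(lt*X/NN) - q*(lt*X/NN + lt*Y/NN) - 2*lt*(lt*X/NN) + 2*lt*(e+w) = 0" .
  show ?thesis unfolding fid_c[OF assms] fid_c[OF assms(1,2,4,3) qt_def Gp_def] N2
    using fin unfolding X_def Y_def NN_def .
qed

lemma inner_mat_trace: "(X::real^'n^'n) \<bullet> Y = trace (transpose X ** Y)"
  unfolding trace_def matrix_matrix_mult_def transpose_def inner_vec_def
  apply simp
  apply (rule sum.swap)
  done

lemma trace_scaleR: "trace (c *\<^sub>R (X::real^'n^'n)) = c * trace X"
  by (simp add: trace_def sum_distrib_left)

lemma trace_transpose: "trace (transpose (X::real^'n^'n)) = trace X"
  by (simp add: trace_def transpose_def)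

lemma inner_transpose: "(X::real^'n^'n) \<bullet> transpose Y = transpose X \<bullet> Y"
proof -
  have "trace (transpose X ** transpose Y) = trace (transpose (Y ** X))" by (simp add: matrix_transpose_mul)
  also have "... = trace (Y ** X)" by (rule trace_transpose)
  also have "... = trace (X ** Y)" by (rule trace_mul_sym)
  finally show ?thesis unfolding inner_mat_trace by simp
qed

lemma inner_matmul_right: "(X::real^'n^'n) \<bullet> (Y ** (P::real^'n^'n)) = (X ** transpose P) \<bullet> Y"
proof -
  have "trace (transpose X ** (Y ** P)) = trace ((transpose X ** Y) ** P)" by (simp add: matrix_mul_assoc)
  also have "... = trace (P ** (transpose X ** Y))" by (rule trace_mul_sym)
  also have "... = trace ((P ** transpose X) ** Y)" by (simp add: matrix_mul_assoc)
  also have "... = trace (transpose (X ** transpose P) ** Y)" by (simp add: matrix_transpose_mul)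
  finally have "trace (transpose X ** (Y ** P)) = trace (transpose (X ** transpose P) ** Y)" .
  then show ?thesis by (simp only: inner_mat_trace)
qed

lemma inner_transpose_both: "transpose (X::real^'n^'n) \<bullet> transpose Y = X \<bullet> Y"
  by (simp add: inner_transpose)

lemma transpose_add: "transpose ((A::real^'n^'n) + B) = transpose A + transpose B"
  by (simp add: transpose_def vec_eq_iff)
lemma transpose_diff: "transpose ((A::real^'n^'n) - B) = transpose A - transpose B"
  by (simp add: transpose_def vec_eq_iff)
lemma transpose_uminus: "transpose (- (A::real^'n^'n)) = - transpose A"
  by (simp add: transpose_def vec_eq_iff)
lemma transpose_sum: "transpose (sum (f::_ \<Rightarrow> real^'n^'n) S) = sum (\<lambda>i. transpose (f i)) S"
  by (simp add: transpose_def vec_eq_iff)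

lemma matrix_add_rdistrib: "((A::real^'n^'n) + B) ** C = A ** C + B ** C"
  by (simp add: matrix_matrix_mult_def vec_eq_iff algebra_simps sum.distrib)

lemma core:
  fixes P Om Omh Dh X :: "real^'n^'n"
  assumes Psym: "transpose P = P"
  and Ppsd: "\<And>Y::real^'n^'n. Y \<bullet> (Y ** P) \<ge> 0"
  and q: "q \<ge> 0" and lt: "lam * T \<ge> 0"
  and Dh: "transpose Dh = Dh"
  and G: "2 *\<^sub>R ((Omh - Om) ** P) + q *\<^sub>R (Omh + transpose Omh - (2*Oms) *\<^sub>R mat 1)
          + (2*r) *\<^sub>R (Dh - D *\<^sub>R mat 1) + (2*(lam*T)) *\<^sub>R Omh = 0"
  shows "loss_eps P q r lam T Om Oms Dh D Omh \<le> loss_eps P q r lam T Om Oms Dh D X"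
proof -
  define SS where "SS = (\<lambda>Z::real^'n^'n. Z + transpose Z - (2*Oms) *\<^sub>R mat 1)"
  define E where "E = Dh - D *\<^sub>R (mat 1 :: real^'n^'n)"
  define lt where "lt = lam * T"
  have SSt: "transpose (SS Z) = SS Z" for Z
    unfolding SS_def by (simp add: transpose_add transpose_diff transpose_scalar)
  have Et: "transpose E = E" unfolding E_def using Dh by (simp add: transpose_diff transpose_scalar)
  have L: "loss_eps P q r lam T Om Oms Dh D Z = (Z - Om) \<bullet> ((Z - Om) ** P) + q/4 * (SS Z \<bullet> SS Z)
      + r * (SS Z \<bullet> E) + lt * (transpose Z \<bullet> transpose Z)" for Z
  proof -
    have 1: "trace (transpose (Z - Om) ** (Z - Om) ** P) = (Z - Om) \<bullet> ((Z - Om) ** P)"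
      by (simp add: inner_mat_trace matrix_mul_assoc)
    have 2: "trace (SS Z ** SS Z) = SS Z \<bullet> SS Z"
      by (metis SSt inner_mat_trace)
    have 3: "trace (SS Z ** E) = SS Z \<bullet> E"
      by (metis SSt inner_mat_trace)
    have 4: "trace (Z ** transpose Z) = transpose Z \<bullet> transpose Z"
      by (simp add: inner_mat_trace)
    show ?thesis
      unfolding loss_eps_def trace_add trace_scaleR 1 2[unfolded SS_def] 3[unfolded SS_def E_def] 4
      unfolding SS_def E_def lt_def by simp
  qed
  define Y where "Y = X - Omh"
  define A where "A = Omh - Om"
  define S0 where "S0 = SS Omh"
  define W where "W = Y + transpose Y"
  have XY: "X = Omh + Y" unfolding Y_def by simp
  have e1: "(X - Om) \<bullet> ((X - Om) ** P) = A \<bullet> (A ** P) + 2 * ((A ** P) \<bullet> Y) + Y \<bullet> (Y ** P)"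
  proof -
    have "X - Om = A + Y" unfolding XY A_def by simp
    moreover have "A \<bullet> (Y ** P) = (A ** P) \<bullet> Y" by (simp add: inner_matmul_right Psym)
    ultimately show ?thesis
      by (simp add: matrix_add_rdistrib inner_add_left inner_add_right inner_commute[of Y])
  qed
  have sx: "SS X = S0 + W" unfolding SS_def S0_def W_def XY by (simp add: transpose_add)
  have S0W: "S0 \<bullet> W = 2 * (S0 \<bullet> Y)"
  proof -
    have "S0 \<bullet> transpose Y = S0 \<bullet> Y" using inner_transpose[of S0 Y] SSt S0_def by simp
    then show ?thesis unfolding W_def by (simp add: inner_add_right)
  qed
  have WE: "W \<bullet> E = 2 * (E \<bullet> Y)"
  proof -
    have h1: "transpose Y \<bullet> E = E \<bullet> Y"
      using inner_transpose[of Y E] Et by (simp add: inner_commute)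
    have h2: "Y \<bullet> E = E \<bullet> Y" by (rule inner_commute)
    show ?thesis unfolding W_def inner_add_left h1 h2 by simp
  qed
  have e2: "SS X \<bullet> SS X = S0 \<bullet> S0 + 4 * (S0 \<bullet> Y) + W \<bullet> W"
    unfolding sx inner_add_left inner_add_right using S0W inner_commute[of W S0] by simp
  have e3: "SS X \<bullet> E = S0 \<bullet> E + 2 * (E \<bullet> Y)"
    unfolding sx using WE by (simp add: inner_add_left)
  have e4: "transpose X \<bullet> transpose X = transpose Omh \<bullet> transpose Omh + 2 * (Omh \<bullet> Y)
     + transpose Y \<bullet> transpose Y"
    unfolding XY transpose_add inner_add_left inner_add_right inner_transpose_both
    using inner_commute[of Y Omh] by simp
  have GY: "(2 *\<^sub>R (A ** P) + q *\<^sub>R S0 + (2*r) *\<^sub>R E + (2*lt) *\<^sub>R Omh) \<bullet> Y = 0"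
    using G unfolding A_def S0_def SS_def E_def lt_def by simp
  have GY': "2 * ((A ** P) \<bullet> Y) + q * (S0 \<bullet> Y) + 2 * r * (E \<bullet> Y) + 2 * lt * (Omh \<bullet> Y) = 0"
    using GY by (simp add: inner_add_left)
  have Q1: "Y \<bullet> (Y ** P) \<ge> 0" using Ppsd by blast
  have Q2: "q/4 * (W \<bullet> W) \<ge> 0" using q by simp
  have Q3: "lt * (transpose Y \<bullet> transpose Y) \<ge> 0" using lt unfolding lt_def by simp
  have "loss_eps P q r lam T Om Oms Dh D X = loss_eps P q r lam T Om Oms Dh D Omh
     + (2 * ((A ** P) \<bullet> Y) + q * (S0 \<bullet> Y) + 2 * r * (E \<bullet> Y) + 2 * lt * (Omh \<bullet> Y))
     + (Y \<bullet> (Y ** P) + q/4 * (W \<bullet> W) + lt * (transpose Y \<bullet> transpose Y))"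
  proof -
    have LO: "loss_eps P q r lam T Om Oms Dh D Omh = A \<bullet> (A ** P) + q/4 * (S0 \<bullet> S0)
      + r * (S0 \<bullet> E) + lt * (transpose Omh \<bullet> transpose Omh)"
      unfolding L A_def S0_def ..
    show ?thesis unfolding L[of X] LO e1 e2 e3 e4 by (simp add: algebra_simps)
  qed
  then show ?thesis using GY' Q1 Q2 Q3 by linarith
qed

lemma outer_mult_vec: "outer a b *v x = (b \<bullet> x) *\<^sub>R (a::real^'n)"
  by (simp add: outer_def matrix_vector_mult_def inner_vec_def vec_eq_iff sum_distrib_left
      mult.commute mult.left_commute)

lemma sum_mult_vec: "(sum f S) *v (x::real^'n) = sum (\<lambda>i. f i *v x) S"
  by (induct S rule: infinite_finite_induct) (simp_all add: matrix_vector_mult_add_rdistrib)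

lemma transpose_outer: "transpose (outer a b) = outer b (a::real^'n)"
  by (simp add: outer_def transpose_def vec_eq_iff)

lemma onb_expand:
  fixes u :: "nat \<Rightarrow> real^'d"
  assumes on: "\<forall>i\<in>{1..CARD('d)}. \<forall>j\<in>{1..CARD('d)}. u i \<bullet> u j = (if i=j then 1 else 0)"
  shows "x = (\<Sum>i=1..CARD('d). (u i \<bullet> x) *\<^sub>R u i)"
proof -
  define I where "I = {1..CARD('d)}"
  have inj: "inj_on u I"
  proof (rule inj_onI)
    fix i j assume ij: "i \<in> I" "j \<in> I" "u i = u j"
    show "i = j"
    proof (rule ccontr)
      assume "i \<noteq> j"
      have "u i \<bullet> u j = (if i = j then 1 else 0)" using on ij(1) ij(2) unfolding I_def by blast
      then have "u i \<bullet> u j = 0" using \<open>i \<noteq> j\<close> by simp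
      moreover have "u j \<bullet> u j = (if j = j then 1 else 0)" using on ij(2) unfolding I_def by blast
      then have "u j \<bullet> u j = 1" by simp
      ultimately show False using ij(3) by simp
    qed
  qed
  have cardB: "card (u ` I) = CARD('d)" using inj card_image unfolding I_def by fastforce
  have po: "pairwise orthogonal (u ` I)"
    unfolding pairwise_def orthogonal_def using on unfolding I_def by auto
  have nz: "0 \<notin> u ` I"
  proof
    assume "0 \<in> u ` I"
    then obtain i where "i \<in> I" "u i = 0" by auto
    then show False using on unfolding I_def by force
  qed
  have ind: "independent (u ` I)" by (rule pairwise_orthogonal_independent[OF po nz])
  have fin: "finite (u ` I)" unfolding I_def by simp
  have dimU: "dim (UNIV::(real^'d) set) = CARD('d)" by (simp add: DIM_cart)
  have "UNIV \<subseteq> span (u ` I)"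
    using card_ge_dim_independent[OF subset_UNIV ind] dimU cardB by simp
  then have "x \<in> span (u ` I)" by blast
  then have "x \<in> range (\<lambda>c. \<Sum>v\<in>u ` I. c v *\<^sub>R v)"
    unfolding span_finite[OF fin] .
  then obtain c where c: "x = (\<Sum>v\<in>u ` I. c v *\<^sub>R v)" by blast
  have c2: "x = (\<Sum>i\<in>I. c (u i) *\<^sub>R u i)"
    using c unfolding sum.reindex[OF inj] comp_def .
  have co: "u k \<bullet> x = c (u k)" if k: "k \<in> I" for k
  proof -
    have "u k \<bullet> x = (\<Sum>i\<in>I. c (u i) * (u k \<bullet> u i))"
      unfolding c2 by (simp add: inner_sum_right)
    also have "... = (\<Sum>i\<in>I. if i = k then c (u k) else 0)"
      by (rule sum.cong) (use on k in \<open>auto simp: I_def\<close>)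
    also have "... = c (u k)" using k unfolding I_def by simp
    finally show ?thesis .
  qed
  have h: "(\<Sum>i\<in>I. (u i \<bullet> x) *\<^sub>R u i) = (\<Sum>i\<in>I. c (u i) *\<^sub>R u i)"
    by (rule sum.cong) (simp_all add: co)
  show ?thesis unfolding I_def[symmetric] h by (rule c2)
qed

lemma scaleR_mat_vec: "(c *\<^sub>R (A::real^'n^'n)) *v x = c *\<^sub>R (A *v x)"
  by (simp add: vec_eq_iff matrix_vector_mult_def sum_distrib_left algebra_simps)

lemma matmul_outer: "(Y::real^'n^'n) ** outer a b = outer (Y *v a) b"
  by (simp add: vec_eq_iff matrix_matrix_mult_def matrix_vector_mult_def outer_def sum_distrib_right sum_distrib_left algebra_simps)

lemma inner_outer: "(X::real^'n^'n) \<bullet> outer a b = a \<bullet> (X *v b)"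
  by (simp add: inner_vec_def outer_def matrix_vector_mult_def sum_distrib_left algebra_simps)

lemma matmul_sum: "(Y::real^'n^'n) ** sum f S = sum (\<lambda>i. Y ** f i) S"
  by (induct S rule: infinite_finite_induct) (simp_all add: matrix_add_ldistrib)

lemma matmul_scaleR: "(Y::real^'n^'n) ** (c *\<^sub>R M) = c *\<^sub>R (Y ** M)"
  by (simp add: vec_eq_iff matrix_matrix_mult_def sum_distrib_left algebra_simps)

lemma comp_transpose: "x \<bullet> (transpose M *v y) = y \<bullet> ((M::real^'n^'n) *v x)"
  by (simp add: inner_commute[of x] dot_lmul_matrix)

lemma comp_add: "x \<bullet> (((A::real^'n^'n) + B) *v y) = x \<bullet> (A *v y) + x \<bullet> (B *v y)"
  by (simp add: matrix_vector_mult_add_rdistrib inner_add_right)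
lemma comp_diff: "x \<bullet> (((A::real^'n^'n) - B) *v y) = x \<bullet> (A *v y) - x \<bullet> (B *v y)"
  by (simp add: matrix_vector_mult_diff_rdistrib inner_diff_right)
lemma comp_scaleR: "x \<bullet> ((c *\<^sub>R (A::real^'n^'n)) *v y) = c * (x \<bullet> (A *v y))"
  by (simp add: scaleR_mat_vec)
lemma comp_uminus: "x \<bullet> ((- (A::real^'n^'n)) *v y) = - (x \<bullet> (A *v y))"
proof -
  have "(- A) *v y = - (A *v y)"
    by (simp add: vec_eq_iff matrix_vector_mult_def sum_negf[symmetric])
  then show ?thesis by simp
qed
lemma comp_one: "x \<bullet> ((mat 1 :: real^'n^'n) *v y) = x \<bullet> y"
  by simp

lemma mat_vec_sum: "(M::real^'n^'n) *v sum f S = sum (\<lambda>i. M *v f i) S"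
  by (induct S rule: infinite_finite_induct) (simp_all add: matrix_vector_right_distrib)

lemma mat_zero_basis:
  fixes u :: "nat \<Rightarrow> real^'d" and M :: "real^'d^'d"
  assumes on: "\<forall>i\<in>{1..CARD('d)}. \<forall>j\<in>{1..CARD('d)}. u i \<bullet> u j = (if i=j then 1 else 0)"
  and z: "\<forall>k\<in>{1..CARD('d)}. \<forall>l\<in>{1..CARD('d)}. u k \<bullet> (M *v u l) = 0"
  shows "M = 0"
proof -
  have Ml: "M *v u l = 0" if l: "l \<in> {1..CARD('d)}" for l
    using onb_expand[OF on, of "M *v u l"] z l by simp
  have "M *v x = 0 *v x" for x
  proof -
    have "M *v x = M *v (\<Sum>i=1..CARD('d). (u i \<bullet> x) *\<^sub>R u i)"
      using onb_expand[OF on, of x] by simp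
    also have "... = (\<Sum>i=1..CARD('d). (u i \<bullet> x) *\<^sub>R (M *v u i))"
      by (simp add: mat_vec_sum matrix_vector_mult_scaleR)
    also have "... = 0" using Ml by simp
    finally show ?thesis by simp
  qed
  then show ?thesis using matrix_eq by blast
qed

theorem mainTheorem2:
  fixes Oms D Sig0 T eps lam :: real
    and Oma Dh :: "real^'d^'d"
    and m0 :: "real^'d"
    and u :: "nat \<Rightarrow> real^'d"
    and gam :: "nat \<Rightarrow> real"
  assumes Oms_neg: "Oms < 0"
    and skew: "transpose Oma = - Oma"
    and D_pos: "D > 0"
    and Sig0_pos: "Sig0 > 0"
    and T_pos: "T > 0"
    and eps_nonneg: "eps \<ge> 0"
    and lam_pos: "lam > 0"
    and Dh_sym: "transpose Dh = Dh"
    and orthonormal: "\<forall>i\<in>{1..CARD('d)}. \<forall>j\<in>{1..CARD('d)}.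
                        u i \<bullet> u j = (if i = j then 1 else 0)"
    and gam_sorted: "\<forall>i\<in>{1..CARD('d)}. \<forall>j\<in>{1..CARD('d)}. i \<le> j \<longrightarrow> gam j \<le> gam i"
    and gam_nonneg: "\<forall>i\<in>{1..CARD('d)}. gam i \<ge> 0"
    and eig: "integral {0..T} (\<lambda>t. outer (mexp (t *\<^sub>R (Oms *\<^sub>R mat 1 + Oma)) *v m0)
                                        (mexp (t *\<^sub>R (Oms *\<^sub>R mat 1 + Oma)) *v m0))
              = (\<Sum>i=1..CARD('d). gam i *\<^sub>R outer (u i) (u i))"
  shows
    "let Om = Oms *\<^sub>R mat 1 + Oma;
         sig2 = (\<lambda>t. Sig0 * exp (2 * Oms * t) + D * (exp (2 * Oms * t) - 1) / Oms);
         P = integral {0..T} (\<lambda>t. outer (mexp (t *\<^sub>R Om) *v m0) (mexp (t *\<^sub>R Om) *v m0));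
         q = integral {0..T} (\<lambda>t. (sig2 t)\<^sup>2 / sqrt (eps\<^sup>2 / 16 + (sig2 t)\<^sup>2));
         r = integral {0..T} (\<lambda>t. sig2 t / sqrt (eps\<^sup>2 / 16 + (sig2 t)\<^sup>2));
         lt = lam * T;
         qt = q + lt;
         Gp = (inverse lt + inverse qt) / 2;
         w = (\<lambda>i j. u i \<bullet> (Oma *v u j));
         et = (\<lambda>i j. u i \<bullet> ((Oms *\<^sub>R mat 1 + (r / lt) *\<^sub>R (Dh - D *\<^sub>R mat 1)) *v u j));
         Omh = Om - (\<Sum>i=1..CARD('d). \<Sum>j=1..CARD('d).
                 ((lt * inverse qt * et i j * (1 + gam i * inverse lt)
                   + w i j * (1 + gam i * inverse qt))
                  / (inverse qt * inverse lt * gam i * gam j + Gp * (gam i + gam j) + 1))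
                 *\<^sub>R outer (u i) (u j))
     in \<forall>X :: real^'d^'d. loss_eps P q r lam T Om Oms Dh D Omh \<le> loss_eps P q r lam T Om Oms Dh D X"
proof -
  define I where "I = {1..CARD('d)}"
  define Om where "Om = Oms *\<^sub>R mat 1 + Oma"
  define sig2 where "sig2 = (\<lambda>t. Sig0 * exp (2 * Oms * t) + D * (exp (2 * Oms * t) - 1) / Oms)"
  define P where "P = integral {0..T} (\<lambda>t. outer (mexp (t *\<^sub>R Om) *v m0) (mexp (t *\<^sub>R Om) *v m0))"
  define q where "q = integral {0..T} (\<lambda>t. (sig2 t)\<^sup>2 / sqrt (eps\<^sup>2 / 16 + (sig2 t)\<^sup>2))"
  define r where "r = integral {0..T} (\<lambda>t. sig2 t / sqrt (eps\<^sup>2 / 16 + (sig2 t)\<^sup>2))"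
  define lt where "lt = lam * T"
  define qt where "qt = q + lt"
  define Gp where "Gp = (inverse lt + inverse qt) / 2"
  define w where "w = (\<lambda>i j. u i \<bullet> (Oma *v u j))"
  define E where "E = Dh - D *\<^sub>R (mat 1::real^'d^'d)"
  define et where "et = (\<lambda>i j. u i \<bullet> ((Oms *\<^sub>R mat 1 + (r / lt) *\<^sub>R E) *v u j))"
  define c where "c = (\<lambda>i j. (lt * inverse qt * et i j * (1 + gam i * inverse lt)
                   + w i j * (1 + gam i * inverse qt))
                  / (inverse qt * inverse lt * gam i * gam j + Gp * (gam i + gam j) + 1))"
  define C where "C = (\<Sum>i=1..CARD('d). \<Sum>j=1..CARD('d). c i j *\<^sub>R outer (u i) (u j))"
  define Omh where "Omh = Om - C"
  have on: "\<And>i j. i \<in> I \<Longrightarrow> j \<in> I \<Longrightarrow> u i \<bullet> u j = (if i = j then 1 else 0)"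
    using orthonormal unfolding I_def by blast
  have finI: "finite I" unfolding I_def by simp
  have lt_pos: "lt > 0" unfolding lt_def using lam_pos T_pos by simp
  have q_nn: "q \<ge> 0"
  proof -
    have nn: "\<forall>t\<in>{0..T}. 0 \<le> (sig2 t)\<^sup>2 / sqrt (eps\<^sup>2 / 16 + (sig2 t)\<^sup>2)" by simp
    show ?thesis
    proof (cases "(\<lambda>t. (sig2 t)\<^sup>2 / sqrt (eps\<^sup>2 / 16 + (sig2 t)\<^sup>2)) integrable_on {0..T}")
      case True then show ?thesis unfolding q_def by (rule integral_nonneg) simp
    next
      case False then show ?thesis unfolding q_def by (simp add: not_integrable_integral)
    qed
  qed
  have gnn: "\<And>k. k \<in> I \<Longrightarrow> gam k \<ge> 0" using gam_nonneg unfolding I_def by blast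
  have Pdef: "P = (\<Sum>i\<in>I. gam i *\<^sub>R outer (u i) (u i))"
    unfolding P_def Om_def I_def using eig by simp
  have Psym: "transpose P = P"
    unfolding Pdef transpose_sum transpose_scalar transpose_outer ..
  have Pu: "P *v u l = gam l *\<^sub>R u l" if l: "l \<in> I" for l
  proof -
    have "P *v u l = (\<Sum>i\<in>I. (gam i * (u i \<bullet> u l)) *\<^sub>R u i)"
      unfolding Pdef sum_mult_vec scaleR_mat_vec outer_mult_vec by (simp add: inner_commute)
    also have "... = (\<Sum>i\<in>I. if i = l then gam l *\<^sub>R u l else 0)"
      by (rule sum.cong) (use on l in auto)
    also have "... = gam l *\<^sub>R u l" using l unfolding I_def by simp
    finally show ?thesis .
  qed
  have Ppsd: "Y \<bullet> (Y ** P) \<ge> 0" for Y :: "real^'d^'d"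
  proof -
    have "Y \<bullet> (Y ** P) = (\<Sum>i\<in>I. gam i * ((Y *v u i) \<bullet> (Y *v u i)))"
      unfolding Pdef matmul_sum matmul_scaleR matmul_outer inner_sum_right inner_scaleR_right inner_outer ..
    also have "... \<ge> 0" using gnn by (simp add: sum_nonneg)
    finally show ?thesis .
  qed
  have Cc: "u k \<bullet> (C *v u l) = c k l" if k: "k \<in> I" and l: "l \<in> I" for k l
  proof -
    have "u k \<bullet> (C *v u l) = (\<Sum>i\<in>I. \<Sum>j\<in>I. c i j * (u j \<bullet> u l) * (u k \<bullet> u i))"
      unfolding C_def I_def[symmetric] sum_mult_vec scaleR_mat_vec outer_mult_vec inner_sum_right
      by (simp add: mult.assoc)
    also have "... = (\<Sum>i\<in>I. if i = k then c k l else 0)"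
    proof (rule sum.cong)
      fix i assume i: "i \<in> I"
      have "(\<Sum>j\<in>I. c i j * (u j \<bullet> u l) * (u k \<bullet> u i)) = (\<Sum>j\<in>I. if j = l then c i l * (u k \<bullet> u i) else 0)"
        by (rule sum.cong) (use on l i in auto)
      also have "... = c i l * (u k \<bullet> u i)" using l finI by simp
      also have "... = (if i = k then c k l else 0)" using on[OF k i] by auto
      finally show "(\<Sum>j\<in>I. c i j * (u j \<bullet> u l) * (u k \<bullet> u i)) = (if i = k then c k l else 0)" .
    qed simp
    also have "... = c k l" using k unfolding I_def by simp
    finally show ?thesis .
  qed
  have two: "(2*Oms) *\<^sub>R (mat 1::real^'d^'d) = Oms *\<^sub>R mat 1 + Oms *\<^sub>R mat 1"
    by (metis mult_2 scaleR_left_distrib)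
  have S0: "Omh + transpose Omh - (2*Oms) *\<^sub>R mat 1 = - (C + transpose C)"
    unfolding Omh_def Om_def transpose_add transpose_diff transpose_scalar skew transpose_mat two
    by (simp add: algebra_simps)
  have AC: "Omh - Om = - C" unfolding Omh_def by simp
  define G where "G = 2 *\<^sub>R ((Omh - Om) ** P) + q *\<^sub>R (Omh + transpose Omh - (2*Oms) *\<^sub>R mat 1)
          + (2*r) *\<^sub>R (Dh - D *\<^sub>R mat 1) + (2*(lam*T)) *\<^sub>R Omh"
  have etg: "et i j = Oms * (u i \<bullet> u j) + (r/lt) * (u i \<bullet> (E *v u j))" for i j
    unfolding et_def comp_add comp_scaleR comp_one ..
  have Gkl: "u k \<bullet> (G *v u l) = 0" if k: "k \<in> I" and l: "l \<in> I" for k l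
  proof -
    have MP: "u k \<bullet> ((M ** P) *v u l) = gam l * (u k \<bullet> (M *v u l))" for M
    proof -
      have "(M ** P) *v u l = M *v (P *v u l)" by (simp add: matrix_vector_mul_assoc)
      then show ?thesis using Pu[OF l] by (simp add: matrix_vector_mult_scaleR)
    qed
    have Ekl: "u k \<bullet> (E *v u l) = u l \<bullet> (E *v u k)"
    proof -
      have "transpose E = E" unfolding E_def using Dh_sym by (simp add: transpose_diff transpose_scalar)
      then show ?thesis using comp_transpose[of "u k" E "u l"] by simp
    qed
    have etlk: "et l k = et k l"
      unfolding etg Ekl by (simp add: inner_commute)
    have wlk: "w l k = - w k l"
    proof -
      have "u k \<bullet> (transpose Oma *v u l) = u l \<bullet> (Oma *v u k)" by (rule comp_transpose)
      then show ?thesis unfolding w_def skew comp_uminus by simp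
    qed
    have Omkl: "u k \<bullet> (Om *v u l) = Oms * (u k \<bullet> u l) + w k l"
      unfolding Om_def w_def comp_add comp_scaleR comp_one ..
    have Omhkl: "u k \<bullet> (Omh *v u l) = Oms * (u k \<bullet> u l) + w k l - c k l"
      unfolding Omh_def comp_diff Omkl Cc[OF k l] ..
    have CT: "u k \<bullet> (transpose C *v u l) = c l k"
      using comp_transpose[of "u k" C "u l"] Cc[OF l k] by simp
    have "u k \<bullet> (G *v u l) = 2 * (- (gam l * c k l)) + q * (- (c k l + c l k)) + 2*r*(u k \<bullet> (E *v u l))
        + 2*lt*(Oms * (u k \<bullet> u l) + w k l - c k l)"
      unfolding G_def S0 AC E_def[symmetric] lt_def[symmetric] comp_add comp_scaleR MP comp_uminus
        Cc[OF k l] CT Omhkl by simp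
    also have "... = -2*gam l*c k l - q*(c k l + c l k) - 2*lt*c k l + 2*lt*(et k l + w k l)"
      unfolding etg using lt_pos by (simp add: field_simps)
    also have "... = 0"
      unfolding c_def etlk wlk
      by (rule fid[OF lt_pos q_nn gnn[OF k] gnn[OF l] qt_def Gp_def])
    finally show ?thesis .
  qed
  have G0: "G = 0"
    by (rule mat_zero_basis[OF orthonormal]) (use Gkl in \<open>auto simp: I_def\<close>)
  have ltnn: "lam * T \<ge> 0" using lam_pos T_pos by simp
  have main: "\<forall>X. loss_eps P q r lam T Om Oms Dh D Omh \<le> loss_eps P q r lam T Om Oms Dh D X"
    using core[OF Psym Ppsd q_nn ltnn Dh_sym G0[unfolded G_def]] by blast
  show ?thesis
    unfolding Let_def using main unfolding Omh_def C_def c_def et_def E_def w_def Gp_def qt_def lt_def r_def q_def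
      P_def sig2_def Om_def .
qed

end
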